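(* There is a constant $C>0$ such that for every positive integer $n$, there is a family $\mathcal{P}_n\subseteq 2^{[n]}$ of subsets of $[n]=\{1,\dots,n\}$ with $|\mathcal{P}_n|\leq 2^{\frac23 n + C\sqrt{n}}$ such that the poset $(\mathcal{P}_n,\subseteq)$ contains every $n$-element poset.
   Context: A poset $(U,\leq)$ contains a poset $(P,\preceq)$ if there is a subset $P'\subseteq U$ such that $(P',\leq)$ (the restriction of $\leq$ to $P'$) is isomorphic to $(P,\preceq)$; i.e. containment is as an induced subposet. $2^{[n]}$ denotes the set of all subsets of $[n]$, ordered by inclusion. *)

theory Defs
  imports Complex_Main
begin

definition is_poset :: "'a set \<Rightarrow> ('a \<Rightarrow> 'a \<Rightarrow> bool) \<Rightarrow> bool" where
  "is_poset A le \<longleftrightarrow>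
     (\<forall>x\<in>A. le x x) \<and>
     (\<forall>x\<in>A. \<forall>y\<in>A. le x y \<and> le y x \<longrightarrow> x = y) \<and>
     (\<forall>x\<in>A. \<forall>y\<in>A. \<forall>z\<in>A. le x y \<and> le y z \<longrightarrow> le x z)"

definition contains_poset :: "'b set set \<Rightarrow> 'a set \<Rightarrow> ('a \<Rightarrow> 'a \<Rightarrow> bool) \<Rightarrow> bool" where
  "contains_poset U A le \<longleftrightarrow>
     (\<exists>f. f ` A \<subseteq> U \<and> inj_on f A \<and> (\<forall>x\<in>A. \<forall>y\<in>A. le x y \<longleftrightarrow> f x \<subseteq> f y))"

end

theory Submission
  imports Defs "HOL-Library.Multiset"
begin

lemma contains_mono: "contains_poset U A le \<Longrightarrow> U \<subseteq> V \<Longrightarrow> contains_poset V A le"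
  unfolding contains_poset_def
proof -
  assume "\<exists>f. f ` A \<subseteq> U \<and> inj_on f A \<and> (\<forall>x\<in>A. \<forall>y\<in>A. le x y = (f x \<subseteq> f y))" "U \<subseteq> V"
  then obtain f where "f ` A \<subseteq> U" "inj_on f A" "\<forall>x\<in>A. \<forall>y\<in>A. le x y = (f x \<subseteq> f y)" by blast
  then show "\<exists>f. f ` A \<subseteq> V \<and> inj_on f A \<and> (\<forall>x\<in>A. \<forall>y\<in>A. le x y = (f x \<subseteq> f y))"
    using \<open>U \<subseteq> V\<close> by (intro exI[of _ f]) auto
qed
lemma poset_subset: "is_poset A le \<Longrightarrow> B \<subseteq> A \<Longrightarrow> is_poset B le"
  unfolding is_poset_def by (meson subsetD)
lemma contains_intro:
  assumes po: "is_poset A le"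
    and inF: "\<And>x. x \<in> A \<Longrightarrow> f x \<in> F"
    and iff: "\<And>x y. x \<in> A \<Longrightarrow> y \<in> A \<Longrightarrow> le x y \<longleftrightarrow> f x \<subseteq> f y"
  shows "contains_poset F A le"
  unfolding contains_poset_def
proof (intro exI conjI)
  show "f ` A \<subseteq> F" using inF by auto
  show "inj_on f A"
  proof (rule inj_onI)
    fix x y assume "x \<in> A" "y \<in> A" "f x = f y"
    then have "le x y" "le y x" using iff by auto
    then show "x = y" using po \<open>x \<in> A\<close> \<open>y \<in> A\<close> unfolding is_poset_def by blast
  qed
  show "\<forall>x\<in>A. \<forall>y\<in>A. le x y = (f x \<subseteq> f y)" using iff by blast
qed

lemma embed_by_mem:
  assumes po: "is_poset A le" and fin: "finite I"
    and mono: "\<And>c x y. c \<in> I \<Longrightarrow> x \<in> A \<Longrightarrow> y \<in> A \<Longrightarrow> le x y \<Longrightarrow> mem x c \<Longrightarrow> mem y c"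
    and sep: "\<And>x y. x \<in> A \<Longrightarrow> y \<in> A \<Longrightarrow> \<not> le x y \<Longrightarrow> \<exists>c\<in>I. mem x c \<and> \<not> mem y c"
    and cardI: "card I \<le> k"
  shows "contains_poset (Pow {1..k}) A le"
proof -
  obtain h where h: "bij_betw h I {1..card I}"
    using finite_same_card_bij[OF fin, of "{1..card I}"] by auto
  have inj: "inj_on h I" using h by (simp add: bij_betw_def)
  have hI: "h ` I = {1..card I}" using h by (simp add: bij_betw_def)
  define f where "f x = h ` {c\<in>I. mem x c}" for x
  show ?thesis
  proof (rule contains_intro[OF po, of f])
    fix x assume "x \<in> A"
    have "f x \<subseteq> {1..card I}" unfolding f_def using hI by blast
    also have "\<dots> \<subseteq> {1..k}" using cardI by auto
    finally show "f x \<in> Pow {1..k}" by blast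
  next
    fix x y assume xy: "x \<in> A" "y \<in> A"
    have "f x \<subseteq> f y \<longleftrightarrow> {c\<in>I. mem x c} \<subseteq> {c\<in>I. mem y c}"
    proof
      assume H: "f x \<subseteq> f y"
      show "{c\<in>I. mem x c} \<subseteq> {c\<in>I. mem y c}"
      proof
        fix c assume c: "c \<in> {c\<in>I. mem x c}"
        then have "h c \<in> f y" using H unfolding f_def by blast
        then obtain c' where c': "c' \<in> I" "mem y c'" "h c' = h c" unfolding f_def by (auto simp: image_iff)
        have "c' = c" by (rule inj_onD[OF inj c'(3) c'(1)]) (use c in simp)
        then show "c \<in> {c\<in>I. mem y c}" using c' by simp
      qed
    next
      assume "{c\<in>I. mem x c} \<subseteq> {c\<in>I. mem y c}"
      then show "f x \<subseteq> f y" unfolding f_def by blast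
    qed
    also have "\<dots> \<longleftrightarrow> le x y"
    proof
      assume H: "{c\<in>I. mem x c} \<subseteq> {c\<in>I. mem y c}"
      show "le x y"
      proof (rule ccontr)
        assume "\<not> le x y"
        then obtain c where "c \<in> I" "mem x c" "\<not> mem y c" using sep xy by blast
        then show False using H by blast
      qed
    next
      assume "le x y"
      then show "{c\<in>I. mem x c} \<subseteq> {c\<in>I. mem y c}" using mono xy by blast
    qed
    finally show "le x y \<longleftrightarrow> f x \<subseteq> f y" by simp
  qed
qed

lemma D_encoding:
  assumes "is_poset A le" "finite A" "card A \<le> k"
  shows "contains_poset (Pow {1..k}) A le"
proof (rule embed_by_mem[OF assms(1,2), where mem="\<lambda>x z. le z x"])
  fix c x y assume "c \<in> A" "x \<in> A" "y \<in> A" "le x y" "le c x"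
  then show "le c y" using assms(1) unfolding is_poset_def by blast
next
  fix x y assume "x \<in> A" "y \<in> A" "\<not> le x y"
  then show "\<exists>c\<in>A. le c x \<and> \<not> le c y" using assms(1) unfolding is_poset_def by blast
qed (use assms in auto)

fun unary :: "nat list \<Rightarrow> nat list \<Rightarrow> nat set" where
  "unary (a#g) (x#h) = {1..x} \<union> (\<lambda>j. j + a) ` unary g h"
| "unary _ _ = {}"

lemma unary_pos: "j \<in> unary g h \<Longrightarrow> j \<ge> 1"
  by (induction g h arbitrary: j rule: unary.induct) fastforce+

lemma split_sub: "X \<subseteq> {..(a::nat)} \<Longrightarrow> X' \<subseteq> {..a} \<Longrightarrow> Y \<subseteq> {a<..} \<Longrightarrow> Y' \<subseteq> {a<..} \<Longrightarrow>
  (X \<union> Y \<subseteq> X' \<union> Y') = (X \<subseteq> X' \<and> Y \<subseteq> Y')"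
  by (auto simp: subset_iff) (meson not_less)+

lemma unary_sub: "list_all2 (\<le>) h g \<Longrightarrow> unary g h \<subseteq> {1..sum_list g}"
proof (induction g h rule: unary.induct)
  case (1 a g x h)
  then have "x \<le> a" "unary g h \<subseteq> {1..sum_list g}" by auto
  then show ?case by auto
qed auto

lemma unary_mono_iff:
  "list_all2 (\<le>) h g \<Longrightarrow> list_all2 (\<le>) h' g \<Longrightarrow>
   (unary g h \<subseteq> unary g h' \<longleftrightarrow> list_all2 (\<le>) h h')"
proof (induction g arbitrary: h h')
  case Nil
  then show ?case by auto
next
  case (Cons a g)
  obtain x hh where h: "h = x # hh" using Cons.prems(1) by (cases h) auto
  obtain x' hh' where h': "h' = x' # hh'" using Cons.prems(2) by (cases h') auto
  have xa: "x \<le> a" "x' \<le> a" and r: "list_all2 (\<le>) hh g" "list_all2 (\<le>) hh' g"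
    using Cons.prems h h' by auto
  have IH: "unary g hh \<subseteq> unary g hh' \<longleftrightarrow> list_all2 (\<le>) hh hh'"
    using Cons.IH r by blast
  have low: "{1..x} \<subseteq> {..a}" "{1..x'} \<subseteq> {..a}" using xa by auto
  have high: "(\<lambda>j. j + a) ` S \<subseteq> {a<..}" if "\<And>j. j \<in> S \<Longrightarrow> j \<ge> 1" for S
  proof (rule image_subsetI)
    fix j assume "j \<in> S"
    then have "j \<ge> 1" using that by blast
    then show "j + a \<in> {a<..}" by simp
  qed
  have hi1: "(\<lambda>j. j + a) ` unary g hh \<subseteq> {a<..}" "(\<lambda>j. j + a) ` unary g hh' \<subseteq> {a<..}"
    using high unary_pos by blast+
  have "unary (a#g) h \<subseteq> unary (a#g) h' \<longleftrightarrow>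
        {1..x} \<subseteq> {1..x'} \<and> (\<lambda>j. j + a) ` unary g hh \<subseteq> (\<lambda>j. j + a) ` unary g hh'"
  proof -
    have "unary (a#g) h = {1..x} \<union> (\<lambda>j. j + a) ` unary g hh" using h by simp
    moreover have "unary (a#g) h' = {1..x'} \<union> (\<lambda>j. j + a) ` unary g hh'" using h' by simp
    ultimately show ?thesis using split_sub[OF low hi1] by simp
  qed
  also have "\<dots> \<longleftrightarrow> x \<le> x' \<and> unary g hh \<subseteq> unary g hh'"
    by (auto simp: inj_image_subset_iff inj_def)
  also have "\<dots> \<longleftrightarrow> list_all2 (\<le>) h h'" using IH h h' by simp
  finally show ?case .
qed

definition Hs :: "nat list \<Rightarrow> nat list set" where
  "Hs g = {h. list_all2 (\<le>) h g}"

lemma Hs_Cons: "Hs (a#g) = (\<lambda>(x,h). x#h) ` ({..a} \<times> Hs g)"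
  unfolding Hs_def by (auto simp: list_all2_Cons2 image_iff)

lemma Hs_finite_card: "finite (Hs g) \<and> card (Hs g) = prod_list (map Suc g)"
proof (induction g)
  case Nil
  have "Hs [] = {[]}" unfolding Hs_def by auto
  then show ?case by simp
next
  case (Cons a g)
  have inj: "inj_on (\<lambda>(x,h). x#h) ({..a} \<times> Hs g)" by (auto simp: inj_on_def)
  show ?case unfolding Hs_Cons using Cons inj
    by (simp add: card_image card_cartesian_product)
qed

definition Gset :: "nat \<Rightarrow> nat list set" where
  "Gset n = {g. sorted g \<and> set g \<subseteq> {1..9} \<and> sum_list g \<le> n \<and> (prod_list (map Suc g))^24 \<le> 2^(16*n)}"

lemma length_le_sum: "set g \<subseteq> {1..} \<Longrightarrow> length g \<le> sum_list (g::nat list)"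
  by (induction g) auto

lemma Gset_card: "finite (Gset n) \<and> card (Gset n) \<le> (n+1)^9"
proof -
  define \<phi> where "\<phi> g = map (count_list g) [1..<10]" for g
  have inj: "inj_on \<phi> (Gset n)"
  proof (rule inj_onI)
    fix g1 g2 assume g1: "g1 \<in> Gset n" and g2: "g2 \<in> Gset n" and e: "\<phi> g1 = \<phi> g2"
    have c: "count_list g1 v = count_list g2 v" for v
    proof (cases "v \<in> {1..9}")
      case True
      then have "v \<in> set [1..<10]" by auto
      then show ?thesis using e unfolding \<phi>_def map_eq_conv by blast
    next
      case False
      then have "v \<notin> set g1" "v \<notin> set g2" using g1 g2 unfolding Gset_def by auto
      then show ?thesis by (simp add: count_list_0_iff)
    qed
    have "mset g1 = mset g2" unfolding multiset_eq_iff by (simp add: count_mset c)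
    then have "sort g1 = sort g2"
      by (metis sorted_list_of_multiset_mset)
    moreover have "sorted g1" "sorted g2" using g1 g2 unfolding Gset_def by auto
    ultimately show "g1 = g2" by (simp add: sorted_sort_id)
  qed
  have sub: "\<phi> ` Gset n \<subseteq> {xs. set xs \<subseteq> {0..n} \<and> length xs = 9}"
  proof
    fix xs assume "xs \<in> \<phi> ` Gset n"
    then obtain g where g: "g \<in> Gset n" "xs = \<phi> g" by blast
    have "set g \<subseteq> {1..}" "sum_list g \<le> n" using g(1) unfolding Gset_def by auto
    then have "length g \<le> n" using length_le_sum[of g] by linarith
    moreover have "count_list g v \<le> length g" for v by (induction g) auto
    ultimately have "count_list g v \<le> n" for v using le_trans by blast
    then show "xs \<in> {xs. set xs \<subseteq> {0..n} \<and> length xs = 9}" using g(2) unfolding \<phi>_def by auto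
  qed
  have fin: "finite {xs. set xs \<subseteq> {0..n} \<and> length xs = 9}"
    by (rule finite_lists_length_eq) simp
  have "card (\<phi> ` Gset n) \<le> (n+1)^9"
    using card_mono[OF fin sub] card_lists_length_eq[of "{0..n}" 9] by simp
  moreover have "finite (\<phi> ` Gset n)" using finite_subset[OF sub fin] .
  ultimately show ?thesis using inj by (simp add: card_image finite_image_iff)
qed

definition FC :: "nat \<Rightarrow> nat set set" where
  "FC n = (\<Union>g\<in>Gset n. unary g ` Hs g)"

lemma FC_sub: "FC n \<subseteq> Pow {1..n}"
proof
  fix S assume "S \<in> FC n"
  then obtain g h where "g \<in> Gset n" "h \<in> Hs g" "S = unary g h" unfolding FC_def by blast
  then show "S \<in> Pow {1..n}" using unary_sub[of h g] unfolding Gset_def Hs_def by auto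
qed

lemma pow24_bound:
  assumes "(p::nat)^24 \<le> 2^(16*n)"
  shows "real p \<le> 2 powr (2/3 * real n)"
proof -
  have "(2 powr (2/3 * real n))^24 = 2 powr (2/3 * real n * 24)"
    by (simp add: powr_realpow[symmetric] powr_powr)
  also have "\<dots> = 2 ^ (16*n)" by (simp add: powr_realpow[symmetric] algebra_simps)
  finally have e: "(2 powr (2/3 * real n))^24 = 2 ^ (16*n)" .
  have "real p ^ 24 \<le> 2 ^ (16 * n)" using assms
    by (metis of_nat_le_iff of_nat_numeral of_nat_power)
  then have "real p ^ Suc 23 \<le> (2 powr (2/3 * real n))^ Suc 23" using e by simp
  then show ?thesis by (rule power_le_imp_le_base) auto
qed

lemma FC_card: "real (card (FC n)) \<le> real ((n+1)^9) * 2 powr (2/3 * real n)"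
proof -
  have fin: "finite (Gset n)" using Gset_card by blast
  have each: "real (card (unary g ` Hs g)) \<le> 2 powr (2/3 * real n)" if "g \<in> Gset n" for g
  proof -
    have "card (unary g ` Hs g) \<le> card (Hs g)" using Hs_finite_card card_image_le by blast
    also have "\<dots> = prod_list (map Suc g)" using Hs_finite_card by blast
    finally have "real (card (unary g ` Hs g)) \<le> real (prod_list (map Suc g))" by simp
    also have "\<dots> \<le> 2 powr (2/3 * real n)" using that pow24_bound unfolding Gset_def by blast
    finally show ?thesis .
  qed
  have "card (FC n) \<le> (\<Sum>g\<in>Gset n. card (unary g ` Hs g))"
    unfolding FC_def using card_UN_le[OF fin] by blast
  then have "real (card (FC n)) \<le> (\<Sum>g\<in>Gset n. real (card (unary g ` Hs g)))"
    by (metis of_nat_le_iff of_nat_sum)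
  also have "\<dots> \<le> (\<Sum>g\<in>Gset n. 2 powr (2/3 * real n))" by (rule sum_mono) (rule each)
  also have "\<dots> = real (card (Gset n)) * 2 powr (2/3 * real n)" by simp
  also have "\<dots> \<le> real ((n+1)^9) * 2 powr (2/3 * real n)"
  proof (rule mult_right_mono)
    show "real (card (Gset n)) \<le> real ((n + 1) ^ 9)" using Gset_card by (simp only: of_nat_le_iff)
  qed simp
  finally show ?thesis .
qed

definition chain_on :: "('a \<Rightarrow> 'a \<Rightarrow> bool) \<Rightarrow> 'a set \<Rightarrow> bool" where
  "chain_on le C \<longleftrightarrow> (\<forall>x\<in>C. \<forall>y\<in>C. le x y \<or> le y x)"

definition antichain_on :: "('a \<Rightarrow> 'a \<Rightarrow> bool) \<Rightarrow> 'a set \<Rightarrow> bool" where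
  "antichain_on le X \<longleftrightarrow> (\<forall>x\<in>X. \<forall>y\<in>X. le x y \<longrightarrow> x = y)"

lemma po_trans: "is_poset A le \<Longrightarrow> x \<in> A \<Longrightarrow> y \<in> A \<Longrightarrow> z \<in> A \<Longrightarrow> le x y \<Longrightarrow> le y z \<Longrightarrow> le x z"
  unfolding is_poset_def by blast
lemma po_refl: "is_poset A le \<Longrightarrow> x \<in> A \<Longrightarrow> le x x"
  unfolding is_poset_def by blast
lemma po_antisym: "is_poset A le \<Longrightarrow> x \<in> A \<Longrightarrow> y \<in> A \<Longrightarrow> le x y \<Longrightarrow> le y x \<Longrightarrow> x = y"
  unfolding is_poset_def by blast

lemma antichain_card_le:
  assumes fin: "finite D" and sub: "Y \<subseteq> \<Union>D" and ch: "\<forall>C\<in>D. chain_on le C"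
    and ac: "antichain_on le Y"
  shows "card Y \<le> card D"
proof -
  define F where "F y = (SOME C. C \<in> D \<and> y \<in> C)" for y
  have F: "F y \<in> D \<and> y \<in> F y" if "y \<in> Y" for y
  proof -
    have "\<exists>C. C \<in> D \<and> y \<in> C" using sub that by blast
    then show ?thesis unfolding F_def by (rule someI_ex)
  qed
  have "inj_on F Y"
  proof (rule inj_onI)
    fix y y' assume y: "y \<in> Y" "y' \<in> Y" "F y = F y'"
    then have "y \<in> F y" "y' \<in> F y" "F y \<in> D" using F by auto
    then have "le y y' \<or> le y' y" using ch unfolding chain_on_def by blast
    then show "y = y'" using ac y unfolding antichain_on_def by metis
  qed
  moreover have "F ` Y \<subseteq> D" using F by blast
  ultimately show ?thesis using card_inj_on_le fin by blast
qed

lemma maximal_exists: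
  assumes po: "is_poset A le" and S: "finite S" "S \<noteq> {}" "S \<subseteq> A"
  shows "\<exists>a\<in>S. \<forall>b\<in>S. le a b \<longrightarrow> b = a"
proof -
  obtain a0 where "a0 \<in> S" using S by blast
  obtain a where a: "a \<in> S" and amin: "\<And>y. y \<in> S \<Longrightarrow> card {c\<in>S. le a c} \<le> card {c\<in>S. le y c}"
    using ex_has_least_nat[of "\<lambda>x. x \<in> S" a0 "\<lambda>x. card {c\<in>S. le x c}"] \<open>a0 \<in> S\<close> by blast
  show ?thesis
  proof (intro bexI[OF _ a] ballI impI)
    fix b assume b: "b \<in> S" "le a b"
    show "b = a"
    proof (rule ccontr)
      assume ne: "b \<noteq> a"
      have "{c\<in>S. le b c} \<subset> {c\<in>S. le a c}"
      proof
        show "{c\<in>S. le b c} \<subseteq> {c\<in>S. le a c}"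
          using po S(3) a b unfolding is_poset_def by blast
        have "a \<notin> {c\<in>S. le b c}"
          using po S(3) a b ne unfolding is_poset_def by blast
        moreover have "a \<in> {c\<in>S. le a c}" using po S(3) a unfolding is_poset_def by blast
        ultimately show "{c\<in>S. le b c} \<noteq> {c\<in>S. le a c}" by blast
      qed
      then have "card {c\<in>S. le b c} < card {c\<in>S. le a c}"
        using S(1) by (intro psubset_card_mono) auto
      then show False using amin[OF b(1)] by simp
    qed
  qed
qed

lemma chain_max_exists:
  assumes po: "is_poset A le" and S: "finite S" "S \<noteq> {}" "S \<subseteq> A" and ch: "chain_on le S"
  shows "\<exists>m\<in>S. \<forall>y\<in>S. le y m"
proof -
  obtain m where m: "m \<in> S" "\<forall>b\<in>S. le m b \<longrightarrow> b = m" using maximal_exists[OF po S] by blast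
  have "le y m" if "y \<in> S" for y
  proof -
    have "le y m \<or> le m y" using ch m(1) that unfolding chain_on_def by blast
    moreover have "le m m" using po m(1) S(3) unfolding is_poset_def by blast
    ultimately show ?thesis using m(2) that by metis
  qed
  then show ?thesis using m(1) by blast
qed

lemma dilworth:
  assumes "finite A" "is_poset A le"
  shows "\<exists>CC X. finite CC \<and> \<Union>CC = A \<and> pairwise disjnt CC \<and> (\<forall>C\<in>CC. chain_on le C)
          \<and> X \<subseteq> A \<and> antichain_on le X \<and> card CC \<le> card X"
  using assms
proof (induction "card A" arbitrary: A rule: less_induct)
  case less
  note fin = less.prems(1) and po = less.prems(2)
  show ?case
  proof (cases "A = {}")
    case True
    then show ?thesis
      by (intro exI[of _ "{}"]) (auto simp: antichain_on_def)
  next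
    case False
    obtain a where a: "a \<in> A" and amax: "\<And>b. b \<in> A \<Longrightarrow> le a b \<Longrightarrow> b = a"
      using maximal_exists[OF po fin False] by blast
    define A' where "A' = A - {a}"
    have A'sub: "A' \<subseteq> A" unfolding A'_def by blast
    have lt: "card A' < card A" unfolding A'_def using card_Diff1_less[OF fin a] .
    have finA': "finite A'" using fin A'sub by (rule finite_subset[rotated])
    have poA': "is_poset A' le" using po A'sub by (rule poset_subset)
    obtain CC' X' where CC': "finite CC'" "\<Union>CC' = A'" "pairwise disjnt CC'"
        "\<forall>C\<in>CC'. chain_on le C" and X': "X' \<subseteq> A'" "antichain_on le X'" "card CC' \<le> card X'"
      using less.hyps[OF lt finA' poA'] by blast
    define k where "k = card CC'"
    have "card X' \<le> k" unfolding k_def using antichain_card_le[OF CC'(1) _ CC'(4) X'(2)] X'(1) CC'(2) by blast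
    then have kX: "card X' = k" using X'(3) unfolding k_def by simp
    define AA where "AA = {Y. Y \<subseteq> A' \<and> antichain_on le Y \<and> card Y = k}"
    have X'AA: "X' \<in> AA" unfolding AA_def using X' kX by blast
    have meet: "Y \<inter> C \<noteq> {}" if C: "C \<in> CC'" and Y: "Y \<in> AA" for C Y
    proof
      assume e: "Y \<inter> C = {}"
      have "Y \<subseteq> \<Union>(CC' - {C})" using Y e CC'(2) unfolding AA_def by blast
      then have "card Y \<le> card (CC' - {C})"
        using antichain_card_le[of "CC' - {C}" Y le] CC'(1,4) Y unfolding AA_def by blast
      also have "\<dots> = k - 1" unfolding k_def using C CC'(1) by simp
      finally have "card Y \<le> k - 1" .
      moreover have "card Y = k" using Y unfolding AA_def by blast
      moreover have "k \<ge> 1" unfolding k_def using C CC'(1) card_0_eq[OF CC'(1)] by fastforce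
      ultimately show False by simp
    qed
    have Csub: "C \<subseteq> A'" if "C \<in> CC'" for C using that CC'(2) by blast
    define M where "M C = {y\<in>C. \<exists>Y\<in>AA. y \<in> Y}" for C
    define xm where "xm C = (SOME m. m \<in> M C \<and> (\<forall>y\<in>M C. le y m))" for C
    have xm: "xm C \<in> M C \<and> (\<forall>y\<in>M C. le y (xm C))" if C: "C \<in> CC'" for C
    proof -
      have ne: "M C \<noteq> {}" using meet[OF C X'AA] X'AA unfolding M_def by blast
      have sA: "M C \<subseteq> A" using Csub[OF C] A'sub unfolding M_def by blast
      have fM: "finite (M C)" using finite_subset[OF sA fin] .
      have chC: "chain_on le C" using CC'(4) C by blast
      have chM: "chain_on le (M C)" using chC unfolding M_def chain_on_def by blast
      have "\<exists>m\<in>M C. \<forall>y\<in>M C. le y m" by (rule chain_max_exists[OF po fM ne sA chM])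
      then have "\<exists>m. m \<in> M C \<and> (\<forall>y\<in>M C. le y m)" by blast
      then show ?thesis unfolding xm_def by (rule someI_ex)
    qed
    have xmC: "xm C \<in> C" if "C \<in> CC'" for C using xm[OF that] unfolding M_def by blast
    have xmA': "xm C \<in> A'" if "C \<in> CC'" for C using xmC[OF that] Csub[OF that] by blast
    have disj: "C = D" if "C \<in> CC'" "D \<in> CC'" "x \<in> C" "x \<in> D" for C D x
      using CC'(3) that unfolding pairwise_def disjnt_def by blast
    define X'' where "X'' = xm ` CC'"
    have X''ac: "antichain_on le X''" unfolding antichain_on_def X''_def
    proof (intro ballI impI)
      fix u v assume "u \<in> xm ` CC'" "v \<in> xm ` CC'" and uv: "le u v"
      then obtain C D where C: "C \<in> CC'" "u = xm C" and D: "D \<in> CC'" "v = xm D" by blast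
      obtain Y where Y: "Y \<in> AA" "xm D \<in> Y" using xm[OF D(1)] unfolding M_def by blast
      obtain y where y: "y \<in> Y" "y \<in> C" using meet[OF C(1) Y(1)] by blast
      have "y \<in> M C" unfolding M_def using y Y by blast
      then have "le y (xm C)" using xm[OF C(1)] by blast
      moreover have "y \<in> A" using y(2) Csub[OF C(1)] A'sub by blast
      moreover have "xm C \<in> A" using xmA'[OF C(1)] A'sub by blast
      moreover have "xm D \<in> A" using xmA'[OF D(1)] A'sub by blast
      moreover have "le (xm C) (xm D)" using uv C(2) D(2) by simp
      ultimately have "le y (xm D)" using po_trans[OF po] by blast
      then have "y = xm D" using Y y unfolding AA_def antichain_on_def by blast
      then have "C = D" using disj[OF C(1) D(1)] y xmC[OF D(1)] by blast
      then show "u = v" using C D by simp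
    qed
    have injxm: "inj_on xm CC'"
    proof (rule inj_onI)
      fix C D assume "C \<in> CC'" "D \<in> CC'" "xm C = xm D"
      then show "C = D" using disj xmC by metis
    qed
    have cardX'': "card X'' = k" unfolding X''_def k_def using card_image[OF injxm] .
    have X''A': "X'' \<subseteq> A'" unfolding X''_def using xmA' by blast
    show ?thesis
    proof (cases "\<exists>C\<in>CC'. le (xm C) a")
      case False
      define CC where "CC = insert {a} CC'"
      define X where "X = insert a X''"
      have aX'': "a \<notin> X''" using X''A' unfolding A'_def by blast
      have "finite CC" unfolding CC_def using CC'(1) by simp
      moreover have "\<Union>CC = A" unfolding CC_def using CC'(2) a unfolding A'_def by blast
      moreover have "pairwise disjnt CC" unfolding CC_def
        using CC'(3) Csub unfolding A'_def pairwise_insert disjnt_def by blast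
      moreover have "\<forall>C\<in>CC. chain_on le C" unfolding CC_def using CC'(4) po_refl[OF po a] by (auto simp: chain_on_def)
      moreover have "X \<subseteq> A" unfolding X_def using a X''A' A'sub by blast
      moreover have "antichain_on le X" unfolding X_def antichain_on_def
      proof (intro ballI impI)
        fix u v assume u: "u \<in> insert a X''" and v: "v \<in> insert a X''" and uv: "le u v"
        show "u = v"
        proof (cases "u = a")
          case ua: True
          show ?thesis
          proof (cases "v = a")
            case False
            then have "v \<in> A" using v X''A' A'sub by blast
            then have "v = a" using amax uv ua by blast
            then show ?thesis using False by blast
          qed (use ua in simp)
        next
          case una: False
          then have uX: "u \<in> X''" using u by blast
          show ?thesis
          proof (cases "v = a")
            case True
            then show ?thesis using uX uv \<open>\<not> (\<exists>C\<in>CC'. le (xm C) a)\<close> unfolding X''_def by blast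
          next
            case False
            then have "v \<in> X''" using v by blast
            then show ?thesis using X''ac uX uv unfolding antichain_on_def by blast
          qed
        qed
      qed
      moreover have "card CC \<le> card X"
      proof -
        have "card CC \<le> Suc k" unfolding CC_def k_def using card_insert_le_m1
          by (metis CC'(1) card_insert_if le_SucI order_refl)
        moreover have "card X = Suc k" unfolding X_def using aX'' cardX'' X''_def CC'(1)
          by (simp add: card_insert_if)
        ultimately show ?thesis by simp
      qed
      ultimately show ?thesis by blast
    next
      case True
      then obtain C where C: "C \<in> CC'" and xa: "le (xm C) a" by blast
      define K where "K = insert a {z\<in>C. le z (xm C)}"
      define A'' where "A'' = A - K"
      have KA: "K \<subseteq> A" unfolding K_def using a Csub[OF C] A'sub by blast
      have "A'' \<subset> A" unfolding A''_def K_def using a by blast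
      then have lt2: "card A'' < card A" using psubset_card_mono[OF fin] by blast
      have finA'': "finite A''" using fin unfolding A''_def by simp
      have poA'': "is_poset A'' le" using po unfolding A''_def by (rule poset_subset) blast
      obtain CC'' X''' where CC'': "finite CC''" "\<Union>CC'' = A''" "pairwise disjnt CC''"
          "\<forall>C\<in>CC''. chain_on le C" and X''': "X''' \<subseteq> A''" "antichain_on le X'''" "card CC'' \<le> card X'''"
        using less.hyps[OF lt2 finA'' poA''] by blast
      have A''A': "A'' \<subseteq> A'" unfolding A''_def A'_def K_def by blast
      have "card X''' \<le> k" unfolding k_def
        using antichain_card_le[OF CC'(1) _ CC'(4) X'''(2)] X'''(1) A''A' CC'(2) by blast
      moreover have "card X''' \<noteq> k"
      proof
        assume "card X''' = k"
        then have "X''' \<in> AA" unfolding AA_def using X''' A''A' by blast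
        then obtain y where y: "y \<in> X'''" "y \<in> C" using meet[OF C] by blast
        have "y \<in> M C" unfolding M_def using y \<open>X''' \<in> AA\<close> by blast
        then have "y \<in> K" unfolding K_def using xm[OF C] y by blast
        then show False using y X'''(1) unfolding A''_def by blast
      qed
      ultimately have ck: "card X''' < k" by simp
      define CC where "CC = insert K CC''"
      have "finite CC" unfolding CC_def using CC''(1) by simp
      moreover have "\<Union>CC = A" unfolding CC_def using CC''(2) KA unfolding A''_def by blast
      moreover have "pairwise disjnt CC" unfolding CC_def
        using CC''(3) CC''(2) unfolding A''_def pairwise_insert disjnt_def by blast
      moreover have "chain_on le K"
        unfolding chain_on_def
      proof (intro ballI)
        fix u v assume u: "u \<in> K" and v: "v \<in> K"
        have zA: "z \<in> A" if "z \<in> K" for z using that KA by blast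
        have xmA: "xm C \<in> A" using xmA'[OF C] A'sub by blast
        have za: "le z a" if "z \<in> K" for z
        proof (cases "z = a")
          case True then show ?thesis using a po unfolding is_poset_def by blast
        next
          case False
          then have "le z (xm C)" using that unfolding K_def by blast
          then show ?thesis using xa po zA[OF that] xmA a unfolding is_poset_def by blast
        qed
        show "le u v \<or> le v u"
        proof (cases "u = a \<or> v = a")
          case True then show ?thesis using za u v by blast
        next
          case False
          then have "u \<in> C" "v \<in> C" using u v unfolding K_def by blast+
          then show ?thesis using CC'(4) C unfolding chain_on_def by blast
        qed
      qed
      then have "\<forall>C\<in>CC. chain_on le C" unfolding CC_def using CC''(4) by blast
      moreover have "X' \<subseteq> A" using X'(1) A'sub by blast
      moreover have "card CC \<le> card X'"
      proof -
        have "card CC \<le> Suc (card CC'')" unfolding CC_def using CC''(1)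
          by (simp add: card_insert_if)
        then show ?thesis using ck X'''(3) kX by linarith
      qed
      ultimately show ?thesis using X'(2) by blast
    qed
  qed
qed

lemma small_bound: "1 \<le> c \<Longrightarrow> c \<le> 9 \<Longrightarrow> (c+1::nat)^8 \<le> 2^(3*c+7)"
proof -
  assume "1 \<le> c" "c \<le> 9"
  then have "c \<in> {1..9}" by simp
  also have "{1..9} = {1,2,3,4,5,6,7,8,9::nat}" by auto
  finally show ?thesis by (auto simp del: One_nat_def)
qed

lemma split_chain:
  "finite C \<Longrightarrow> \<exists>Q. finite Q \<and> \<Union>Q = C \<and> pairwise disjnt Q \<and> (\<forall>q\<in>Q. q \<noteq> {} \<and> card q \<le> 9)
     \<and> (\<Prod>q\<in>Q. card q + 1)^8 \<le> (2::nat)^(3 * card C + 7)"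
proof (induction "card C" arbitrary: C rule: less_induct)
  case less
  show ?case
  proof (cases "card C \<le> 9")
    case True
    show ?thesis
    proof (cases "C = {}")
      case True
      then show ?thesis by (intro exI[of _ "{}"]) auto
    next
      case False
      then have "1 \<le> card C" using less.prems card_0_eq by fastforce
      then have "(card C + 1)^8 \<le> (2::nat)^(3 * card C + 7)" using small_bound \<open>card C \<le> 9\<close> by blast
      then show ?thesis using False \<open>card C \<le> 9\<close> by (intro exI[of _ "{C}"]) auto
    qed
  next
    case False
    obtain B where B: "B \<subseteq> C" "card B = 9" using obtain_subset_with_card_n[of 9 C] False by force
    define C' where "C' = C - B"
    have finB: "finite B" using B less.prems finite_subset by blast
    have cC': "card C' = card C - 9" unfolding C'_def using B finB less.prems by (simp add: card_Diff_subset)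
    then have "card C' < card C" using False by simp
    then obtain Q' where Q': "finite Q'" "\<Union>Q' = C'" "pairwise disjnt Q'" "\<forall>q\<in>Q'. q \<noteq> {} \<and> card q \<le> 9"
        "(\<Prod>q\<in>Q'. card q + 1)^8 \<le> (2::nat)^(3 * card C' + 7)"
      using less.hyps[of C'] less.prems unfolding C'_def by blast
    have BQ': "B \<notin> Q'"
    proof
      assume "B \<in> Q'"
      then have "B \<subseteq> C'" using Q'(2) by blast
      moreover have "B \<noteq> {}" using B(2) by auto
      ultimately show False using B unfolding C'_def by blast
    qed
    define Q where "Q = insert B Q'"
    have "finite Q" unfolding Q_def using Q'(1) by simp
    moreover have "\<Union>Q = C" unfolding Q_def using Q'(2) B(1) unfolding C'_def by blast
    moreover have "pairwise disjnt Q" unfolding Q_def pairwise_insert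
      using Q'(3) Q'(2) unfolding C'_def disjnt_def by blast
    moreover have "\<forall>q\<in>Q. q \<noteq> {} \<and> card q \<le> 9" unfolding Q_def using Q'(4) B(2) by auto
    moreover have "(\<Prod>q\<in>Q. card q + 1)^8 \<le> (2::nat)^(3 * card C + 7)"
    proof -
      have "(\<Prod>q\<in>Q. card q + 1) = 10 * (\<Prod>q\<in>Q'. card q + 1)"
        unfolding Q_def using Q'(1) BQ' B(2) by simp
      then have "(\<Prod>q\<in>Q. card q + 1)^8 = 10^8 * (\<Prod>q\<in>Q'. card q + 1)^8"
        by (simp add: power_mult_distrib)
      also have "\<dots> \<le> 2^27 * 2^(3 * card C' + 7)"
        using Q'(5) by (intro mult_mono) auto
      also have "\<dots> = (2::nat)^(3 * card C + 7)"
      proof -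
        have "3 * card C + 7 = 27 + (3 * card C' + 7)" using cC' False by simp
        then show ?thesis by (simp only: power_add)
      qed
      finally show ?thesis .
    qed
    ultimately show ?thesis by blast
  qed
qed

lemma pieces:
  assumes fin: "finite A" and CC: "finite CC" "\<Union>CC = A" "pairwise disjnt CC" "\<forall>C\<in>CC. chain_on le C"
  shows "\<exists>P. finite P \<and> \<Union>P = A \<and> pairwise disjnt P \<and> (\<forall>p\<in>P. p \<noteq> {} \<and> card p \<le> 9 \<and> chain_on le p)
     \<and> (\<Prod>p\<in>P. card p + 1)^8 \<le> (2::nat)^(3 * card A + 7 * card CC)"
proof -
  have finC: "finite C" if "C \<in> CC" for C
  proof (rule finite_subset[OF _ fin])
    show "C \<subseteq> A" using that CC(2) by blast
  qed
  define Q where "Q C = (SOME Q. finite Q \<and> \<Union>Q = C \<and> pairwise disjnt Q \<and> (\<forall>q\<in>Q. q \<noteq> {} \<and> card q \<le> 9)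
     \<and> (\<Prod>q\<in>Q. card q + 1)^8 \<le> (2::nat)^(3 * card C + 7))" for C :: "'a set"
  have Q: "finite (Q C) \<and> \<Union>(Q C) = C \<and> pairwise disjnt (Q C) \<and> (\<forall>q\<in>Q C. q \<noteq> {} \<and> card q \<le> 9)
     \<and> (\<Prod>q\<in>Q C. card q + 1)^8 \<le> (2::nat)^(3 * card C + 7)" if "C \<in> CC" for C
    unfolding Q_def by (rule someI_ex[OF split_chain[OF finC[OF that]]])
  have Qf: "finite (Q C)" and QU: "\<Union>(Q C) = C" and Qd: "pairwise disjnt (Q C)"
    and Qn: "\<forall>q\<in>Q C. q \<noteq> {} \<and> card q \<le> 9"
    and Qp: "(\<Prod>q\<in>Q C. card q + 1)^8 \<le> (2::nat)^(3 * card C + 7)" if "C \<in> CC" for C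
    using Q[OF that] by simp_all
  define P where "P = (\<Union>C\<in>CC. Q C)"
  have disjCC: "C \<inter> D = {}" if "C \<in> CC" "D \<in> CC" "C \<noteq> D" for C D
    using CC(3) that unfolding pairwise_def disjnt_def by blast
  have QQ: "Q C \<inter> Q D = {}" if "C \<in> CC" "D \<in> CC" "C \<noteq> D" for C D
  proof (rule ccontr)
    assume "Q C \<inter> Q D \<noteq> {}"
    then obtain p where "p \<in> Q C" "p \<in> Q D" by blast
    then have "p \<subseteq> C" "p \<subseteq> D" "p \<noteq> {}" using QU[OF that(1)] QU[OF that(2)] Qn[OF that(1)] by blast+
    then show False using disjCC[OF that] by blast
  qed
  have "finite P" unfolding P_def using CC(1) Qf by simp
  moreover have "\<Union>P = A"
  proof -
    have "\<Union>P = (\<Union>C\<in>CC. \<Union>(Q C))" unfolding P_def by blast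
    also have "\<dots> = (\<Union>C\<in>CC. C)" using QU by simp
    finally show ?thesis using CC(2) by simp
  qed
  moreover have "pairwise disjnt P" unfolding pairwise_def P_def
  proof (intro ballI impI)
    fix p p' assume p: "p \<in> (\<Union>C\<in>CC. Q C)" and p': "p' \<in> (\<Union>C\<in>CC. Q C)" and ne: "p \<noteq> p'"
    obtain C where C: "C \<in> CC" "p \<in> Q C" using p by blast
    obtain D where D: "D \<in> CC" "p' \<in> Q D" using p' by blast
    show "disjnt p p'"
    proof (cases "C = D")
      case True
      then show ?thesis using Qd[OF C(1)] C D ne unfolding pairwise_def by blast
    next
      case False
      have "p \<subseteq> C" "p' \<subseteq> D" using QU[OF C(1)] QU[OF D(1)] C D by blast+
      then show ?thesis using disjCC[OF C(1) D(1) False] unfolding disjnt_def by blast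
    qed
  qed
  moreover have "\<forall>p\<in>P. p \<noteq> {} \<and> card p \<le> 9 \<and> chain_on le p"
  proof
    fix p assume "p \<in> P"
    then obtain C where C: "C \<in> CC" "p \<in> Q C" unfolding P_def by blast
    then have "p \<subseteq> C" using QU[OF C(1)] by blast
    then have "chain_on le p" using CC(4) C(1) unfolding chain_on_def by blast
    then show "p \<noteq> {} \<and> card p \<le> 9 \<and> chain_on le p" using Qn[OF C(1)] C(2) by blast
  qed
  moreover have "(\<Prod>p\<in>P. card p + 1)^8 \<le> (2::nat)^(3 * card A + 7 * card CC)"
  proof -
    have "(\<Prod>p\<in>P. card p + 1) = (\<Prod>C\<in>CC. \<Prod>p\<in>Q C. card p + 1)"
      unfolding P_def by (rule prod.UNION_disjoint) (use CC(1) Qf QQ in auto)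
    then have "(\<Prod>p\<in>P. card p + 1)^8 = (\<Prod>C\<in>CC. (\<Prod>p\<in>Q C. card p + 1)^8)"
      by (simp add: prod_power_distrib)
    also have "\<dots> \<le> (\<Prod>C\<in>CC. (2::nat)^(3 * card C + 7))"
      by (rule prod_mono) (use Qp in auto)
    also have "\<dots> = 2^(\<Sum>C\<in>CC. 3 * card C + 7)" by (simp add: power_sum)
    also have "(\<Sum>C\<in>CC. 3 * card C + 7) = 3 * (\<Sum>C\<in>CC. card C) + 7 * card CC"
      by (simp add: sum.distrib sum_distrib_left)
    also have "(\<Sum>C\<in>CC. card C) = card A"
      using card_Union_disjoint[OF CC(3)] finC CC(2) by simp
    finally show ?thesis .
  qed
  ultimately show ?thesis by blast
qed

lemma chain_nested:
  assumes po: "is_poset A le" and p: "p \<subseteq> A" "chain_on le p" and uv: "u \<in> A" "v \<in> A"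
  shows "{z\<in>p. le z u} \<subseteq> {z\<in>p. le z v} \<or> {z\<in>p. le z v} \<subseteq> {z\<in>p. le z u}"
proof (rule ccontr)
  assume "\<not> ?thesis"
  then obtain a b where a: "a \<in> p" "le a u" "\<not> le a v" and b: "b \<in> p" "le b v" "\<not> le b u" by blast
  have "le a b \<or> le b a" using p(2) a(1) b(1) unfolding chain_on_def by blast
  then show False
  proof
    assume "le a b"
    then have "le a v" using po_trans[OF po _ _ uv(2) _ b(2)] a(1) b(1) p(1) by blast
    then show False using a by blast
  next
    assume "le b a"
    then have "le b u" using po_trans[OF po _ _ uv(1) _ a(2)] a(1) b(1) p(1) by blast
    then show False using b by blast
  qed
qed

lemma la2_map: "list_all2 R (map f xs) (map g xs) \<longleftrightarrow> (\<forall>x\<in>set xs. R (f x) (g x))"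
  by (induction xs) auto

lemma chain_embedding:
  assumes po: "is_poset A le" and fin: "finite A" and cA: "card A = n"
    and P: "finite P" "\<Union>P = A" "pairwise disjnt P" "\<forall>p\<in>P. p \<noteq> {} \<and> card p \<le> 9 \<and> chain_on le p"
    and bound: "(\<Prod>p\<in>P. card p + 1)^24 \<le> (2::nat)^(16 * n)"
  shows "contains_poset (FC n) A le"
proof -
  obtain ps0 where ps0: "set ps0 = P" "distinct ps0" using finite_distinct_list[OF P(1)] by blast
  define ps where "ps = sort_key card ps0"
  have ps: "set ps = P" "distinct ps" unfolding ps_def using ps0 by (simp_all add: distinct_sort)
  define g where "g = map card ps"
  define h where "h x = map (\<lambda>p. card {z\<in>p. le z x}) ps" for x
  define f where "f x = unary g (h x)" for x
  have finp: "finite p" if "p \<in> P" for p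
  proof (rule finite_subset[OF _ fin])
    show "p \<subseteq> A" using that P(2) by blast
  qed
  have psub: "p \<subseteq> A" if "p \<in> P" for p using that P(2) by blast
  have gG: "g \<in> Gset n"
  proof -
    have "sorted g" unfolding g_def ps_def by (rule sorted_sort_key)
    moreover have "set g \<subseteq> {1..9}" unfolding g_def using ps(1) P(4) finp
      by (auto simp: Suc_le_eq card_gt_0_iff)
    moreover have "sum_list g = n"
    proof -
      have "sum_list g = (\<Sum>p\<in>P. card p)" unfolding g_def
        using sum.distinct_set_conv_list[OF ps(2), of card] ps(1) by simp
      also have "\<dots> = card A" using card_Union_disjoint[OF P(3)] finp P(2) by simp
      finally show ?thesis using cA by simp
    qed
    moreover have "prod_list (map Suc g) = (\<Prod>p\<in>P. card p + 1)" unfolding g_def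
      using prod.distinct_set_conv_list[OF ps(2), of "\<lambda>p. card p + 1"] ps(1) by (simp add: comp_def)
    ultimately show ?thesis unfolding Gset_def using bound by simp
  qed
  have hH: "h x \<in> Hs g" for x
    unfolding Hs_def h_def g_def mem_Collect_eq
    by (subst la2_map) (use ps(1) finp in \<open>auto intro: card_mono\<close>)
  have mem: "f x \<in> FC n" for x unfolding FC_def f_def using gG hH by blast
  have key: "le x y \<longleftrightarrow> f x \<subseteq> f y" if xy: "x \<in> A" "y \<in> A" for x y
  proof -
    have "f x \<subseteq> f y \<longleftrightarrow> list_all2 (\<le>) (h x) (h y)"
      unfolding f_def using unary_mono_iff[of "h x" g "h y"] hH[of x] hH[of y] unfolding Hs_def by simp
    also have "\<dots> \<longleftrightarrow> (\<forall>p\<in>P. card {z\<in>p. le z x} \<le> card {z\<in>p. le z y})"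
      unfolding h_def la2_map using ps(1) by simp
    also have "\<dots> \<longleftrightarrow> le x y"
    proof
      assume H: "\<forall>p\<in>P. card {z\<in>p. le z x} \<le> card {z\<in>p. le z y}"
      obtain p where p: "p \<in> P" "x \<in> p" using xy(1) P(2) by blast
      have chp: "chain_on le p" using P(4) p(1) by blast
      have fL: "finite {z\<in>p. le z y}" using finp[OF p(1)] by simp
      have "{z\<in>p. le z x} \<subseteq> {z\<in>p. le z y}"
      proof (cases "{z\<in>p. le z x} \<subseteq> {z\<in>p. le z y}")
        case False
        then have R: "{z\<in>p. le z y} \<subseteq> {z\<in>p. le z x}"
          using chain_nested[OF po psub[OF p(1)] chp xy] by blast
        have "card {z\<in>p. le z x} \<le> card {z\<in>p. le z y}" using H p(1) by blast
        then have "{z\<in>p. le z y} = {z\<in>p. le z x}"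
          using card_seteq[OF _ R] finp[OF p(1)] by simp
        then show ?thesis by simp
      qed simp
      moreover have "x \<in> {z\<in>p. le z x}" using p po_refl[OF po xy(1)] by blast
      ultimately show "le x y" by blast
    next
      assume "le x y"
      then have "{z\<in>p. le z x} \<subseteq> {z\<in>p. le z y}" if "p \<in> P" for p
        using po_trans[OF po _ xy] psub[OF that] by blast
      then show "\<forall>p\<in>P. card {z\<in>p. le z x} \<le> card {z\<in>p. le z y}"
      proof (intro ballI)
        fix p assume "p \<in> P"
        then show "card {z\<in>p. le z x} \<le> card {z\<in>p. le z y}"
          using \<open>\<And>p. p \<in> P \<Longrightarrow> {z\<in>p. le z x} \<subseteq> {z\<in>p. le z y}\<close> finp
          by (intro card_mono) auto
      qed
    qed
    finally show ?thesis by simp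
  qed
  show ?thesis by (rule contains_intro[OF po mem key])
qed

lemma antichain_embedding:
  assumes po: "is_poset A le" and fin: "finite A" and XA: "X \<subseteq> A" and ac: "antichain_on le X"
    and s2: "2 \<le> s" and cX: "card X \<le> s * s"
  shows "contains_poset (Pow {1..card A - card X + 2*s}) A le"
proof -
  define U where "U = {z \<in> A - X. \<exists>a\<in>X. le a z}"
  define L where "L = (A - X) - U"
  have finX: "finite X" using finite_subset[OF XA fin] .
  obtain idx where idx: "bij_betw idx X {0..<card X}"
    using finite_same_card_bij[OF finX, of "{0..<card X}"] by auto
  have idx_inj: "inj_on idx X" using idx by (simp add: bij_betw_def)
  have idx_lt: "idx x < s * s" if "x \<in> X" for x
  proof -
    have "idx x \<in> {0..<card X}" using idx that by (auto simp: bij_betw_def)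
    then show ?thesis using cX by simp
  qed
  have sp: "0 < s" using s2 by simp
  have div_lt: "idx x div s < s" if "x \<in> X" for x
    using idx_lt[OF that] by (simp add: less_mult_imp_div_less)
  have mod_lt: "idx x mod s < s" for x using sp by simp
  define cd where "cd x = {idx x div s, s + idx x mod s}" for x
  define I where "I = Inl ` (A - X) \<union> Inr ` {..<2*s}"
  define mem where "mem x c = (case c of Inl z \<Rightarrow> (z \<in> L \<and> le z x \<or> z \<in> U \<and> \<not> le x z)
                               | Inr e \<Rightarrow> (x \<in> U \<or> x \<in> X \<and> e \<in> cd x))" for x c
  have finI: "finite I" unfolding I_def using fin by simp
  have cardI: "card I = card A - card X + 2*s"
  proof -
    have "card I = card (Inl ` (A - X) :: ('a + nat) set) + card (Inr ` {..<2*s} :: ('a + nat) set)"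
      unfolding I_def by (rule card_Un_disjoint) (use fin in auto)
    also have "\<dots> = card (A - X) + 2 * s" by (simp add: card_image)
    also have "card (A - X) = card A - card X" using card_Diff_subset[OF finX XA] .
    finally show ?thesis .
  qed
  have mono: "mem y c" if c: "c \<in> I" and xy: "x \<in> A" "y \<in> A" "le x y" and m: "mem x c" for c x y
  proof (cases c)
    case (Inl z)
    then have zA: "z \<in> A" using c unfolding I_def by auto
    have "z \<in> L \<and> le z x \<or> z \<in> U \<and> \<not> le x z" using m Inl unfolding mem_def by simp
    then have "z \<in> L \<and> le z y \<or> z \<in> U \<and> \<not> le y z"
      using po_trans[OF po zA xy(1) xy(2) _ xy(3)] po_trans[OF po xy(1) xy(2) zA xy(3)] by blast
    then show ?thesis using Inl unfolding mem_def by simp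
  next
    case (Inr e)
    have m': "x \<in> U \<or> x \<in> X \<and> e \<in> cd x" using m Inr unfolding mem_def by simp
    have "y \<in> U \<or> y \<in> X \<and> e \<in> cd y"
    proof (cases "x \<in> U")
      case True
      then obtain a where a: "a \<in> X" "le a x" and xX: "x \<notin> X" unfolding U_def by blast
      have aA: "a \<in> A" using a XA by blast
      have ay: "le a y" using po_trans[OF po aA xy(1) xy(2) a(2) xy(3)] .
      have "y \<notin> X"
      proof
        assume "y \<in> X"
        then have "a = y" using ac a(1) ay unfolding antichain_on_def by blast
        then have "x = y" using po_antisym[OF po xy(1) xy(2) xy(3)] a(2) by simp
        then show False using xX \<open>y \<in> X\<close> by simp
      qed
      then show ?thesis unfolding U_def using xy(2) a(1) ay by blast
    next
      case False
      then have xX: "x \<in> X" "e \<in> cd x" using m' by auto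
      show ?thesis
      proof (cases "y \<in> X")
        case True
        then have "x = y" using ac xX(1) xy(3) unfolding antichain_on_def by blast
        then show ?thesis using xX by simp
      next
        case False
        then show ?thesis unfolding U_def using xy(2) xX(1) xy(3) by blast
      qed
    qed
    then show ?thesis using Inr unfolding mem_def by simp
  qed
  have memL: "mem y (Inl z) \<longleftrightarrow> (z \<in> L \<and> le z y \<or> z \<in> U \<and> \<not> le y z)" for y z
    unfolding mem_def by simp
  have memR: "mem y (Inr e) \<longleftrightarrow> (y \<in> U \<or> y \<in> X \<and> e \<in> cd y)" for y e
    unfolding mem_def by simp
  have LU: "L \<inter> U = {}" "L \<inter> X = {}" "U \<inter> X = {}" unfolding L_def U_def by blast+
  have cover: "z \<in> L \<or> z \<in> U \<or> z \<in> X" if "z \<in> A" for z using that unfolding L_def by blast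
  have sep: "\<exists>c\<in>I. mem x c \<and> \<not> mem y c" if xy: "x \<in> A" "y \<in> A" "\<not> le x y" for x y
  proof -
    have rx: "le x x" and ry: "le y y" using po_refl[OF po] xy by blast+
    show ?thesis
    proof (cases "x \<in> L")
      case True
      have "Inl x \<in> I" using True unfolding I_def L_def by blast
      moreover have "mem x (Inl x)" using True rx memL by blast
      moreover have "\<not> mem y (Inl x)" using True xy(3) LU memL by blast
      ultimately show ?thesis by blast
    next
      case xL: False
      show ?thesis
      proof (cases "y \<in> U")
        case True
        have "Inl y \<in> I" using True unfolding I_def U_def by blast
        moreover have "mem x (Inl y)" using True xy(3) memL by blast
        moreover have "\<not> mem y (Inl y)" using True ry LU memL by blast
        ultimately show ?thesis by blast
      next
        case yU: False
        have xXU: "x \<in> X \<or> x \<in> U" using cover[OF xy(1)] xL by blast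
        show ?thesis
        proof (cases "y \<in> X")
          case False
          then have yL: "y \<in> L" using cover[OF xy(2)] yU by blast
          define e where "e = (if x \<in> X then idx x div s else 0)"
          have "e < 2 * s"
          proof (cases "x \<in> X")
            case True
            then have "idx x div s < s" by (rule div_lt)
            then show ?thesis unfolding e_def using True by simp
          qed (use sp e_def in simp)
          then have "Inr e \<in> I" unfolding I_def by blast
          moreover have "mem x (Inr e)" using xXU memR unfolding e_def cd_def by auto
          moreover have "\<not> mem y (Inr e)" using yL LU memR by blast
          ultimately show ?thesis by blast
        next
          case yX: True
          show ?thesis
          proof (cases "x \<in> U")
            case True
            define e where "e = (if idx y div s = 0 then 1 else 0::nat)"
            have "e < s" unfolding e_def using s2 by auto
            then have "Inr e \<in> I" unfolding I_def by auto
            moreover have "mem x (Inr e)" using True memR by blast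
            moreover have "e \<notin> cd y" unfolding cd_def e_def using \<open>e < s\<close> s2 by auto
            then have "\<not> mem y (Inr e)" using yU memR by blast
            ultimately show ?thesis by blast
          next
            case False
            then have xX: "x \<in> X" using xXU by blast
            have xy_ne: "x \<noteq> y" using xy(3) rx by blast
            then have ine: "idx x \<noteq> idx y" using idx_inj xX yX inj_on_eq_iff by metis
            define e where "e = (if idx x div s \<noteq> idx y div s then idx x div s else s + idx x mod s)"
            have "e < 2 * s" unfolding e_def using div_lt[OF xX] mod_lt[of x] by auto
            then have "Inr e \<in> I" unfolding I_def by auto
            moreover have "e \<in> cd x" unfolding e_def cd_def by auto
            then have "mem x (Inr e)" using xX memR by blast
            moreover have "e \<notin> cd y"
            proof
              assume "e \<in> cd y"
              show False
              proof (cases "idx x div s \<noteq> idx y div s")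
                case True
                then have "e = idx x div s" unfolding e_def by simp
                then show False using \<open>e \<in> cd y\<close> True div_lt[OF xX] unfolding cd_def by auto
              next
                case False
                then have e: "e = s + idx x mod s" unfolding e_def by simp
                then have "idx x mod s = idx y mod s" using \<open>e \<in> cd y\<close> div_lt[OF yX] unfolding cd_def by auto
                then have "idx x = idx y" using False by (metis div_mult_mod_eq)
                then show False using ine by simp
              qed
            qed
            then have "\<not> mem y (Inr e)" using yU memR by blast
            ultimately show ?thesis by blast
          qed
        qed
      qed
    qed
  qed
  show ?thesis
    by (rule embed_by_mem[OF po finI, of mem]) (use mono sep cardI in auto)
qed

lemma sq_le_4pow: "s * s + 1 \<le> (4::nat) ^ s"
proof (induction s)
  case (Suc s)
  have "s \<le> s * s" by (cases s) auto
  have "Suc s * Suc s + 1 = s * s + 2 * s + 2" by (simp add: algebra_simps)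
  also have "\<dots> \<le> 4 * (s * s) + 4" using \<open>s \<le> s * s\<close> by linarith
  also have "\<dots> = 4 * (s * s + 1)" by simp
  finally have "Suc s * Suc s + 1 \<le> 4 * (s * s + 1)" .
  also have "\<dots> \<le> 4 * 4 ^ s" using Suc by simp
  finally show ?case by simp
qed simp

lemma s_props:
  assumes "n \<ge> 1" "s = nat \<lceil>sqrt (real n)\<rceil>"
  shows "n \<le> s * s" "real s \<le> sqrt (real n) + 1" "s \<ge> 1"
proof -
  have "sqrt (real n) \<le> real s" using assms(2) by (simp add: real_nat_ceiling_ge)
  then have "sqrt (real n) * sqrt (real n) \<le> real s * real s" by (intro mult_mono) auto
  then have "real n \<le> real (s * s)" by simp
  then show "n \<le> s * s" by linarith
  show "real s \<le> sqrt (real n) + 1" using assms(2) by (simp add: of_nat_nat ceiling_le_iff)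
  have "sqrt (real n) > 0" using assms(1) by simp
  then show "s \<ge> 1" using assms(2) by linarith
qed

lemma final_bound:
  assumes n1: "n \<ge> 1" and s: "s = nat \<lceil>sqrt (real n)\<rceil>" and K: "K = (2*n) div 3 + 2*s"
  shows "2 ^ K + real ((n+1)^9) * 2 powr (2/3 * real n) \<le> 2 powr (2/3 * real n + 37 * sqrt (real n))"
proof -
  note sp = s_props[OF n1 s]
  have "real ((2*n) div 3) \<le> 2/3 * real n"
  proof -
    have "3 * ((2*n) div 3) \<le> 2 * n" by simp
    then have "3 * real ((2*n) div 3) \<le> 2 * real n" by linarith
    then show ?thesis by simp
  qed
  then have K1: "real K \<le> 2/3 * real n + 2 * real s" using K by simp
  have e1: "(2::real) ^ K \<le> 2 powr (2/3 * real n) * 2 ^ (18 * s)"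
  proof -
    have "(2::real) ^ K = 2 powr real K" by (simp add: powr_realpow)
    also have "\<dots> \<le> 2 powr (2/3 * real n + 2 * real s)" using K1 by simp
    also have "\<dots> \<le> 2 powr (2/3 * real n + 18 * real s)" by simp
    also have "\<dots> = 2 powr (2/3 * real n) * 2 powr (real (18 * s))"
      by (simp add: powr_add)
    also have "2 powr (real (18 * s)) = (2::real) ^ (18 * s)" by (rule powr_realpow) simp
    finally show ?thesis .
  qed
  have "n + 1 \<le> 4 ^ s" using sp(1) sq_le_4pow[of s] by linarith
  then have "(n+1)^9 \<le> (4 ^ s)^9" by (rule power_mono) simp
  also have "(4::nat) ^ s = 2 ^ (2 * s)" by (simp add: power_mult)
  finally have "(n+1)^9 \<le> (2::nat) ^ (18 * s)" by (simp add: power_mult[symmetric] mult.commute)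
  then have e2: "real ((n+1)^9) \<le> 2 ^ (18 * s)" by (metis of_nat_le_iff of_nat_numeral of_nat_power)
  have "2 ^ K + real ((n+1)^9) * 2 powr (2/3 * real n)
        \<le> 2 powr (2/3 * real n) * 2 ^ (18 * s) + 2 ^ (18 * s) * 2 powr (2/3 * real n)"
    using e1 e2 by (intro add_mono mult_right_mono) auto
  also have "\<dots> = 2 powr (2/3 * real n) * 2 ^ (18 * s + 1)" by simp
  also have "\<dots> = 2 powr (2/3 * real n) * 2 powr (real (18 * s + 1))"
    using powr_realpow[of 2 "18 * s + 1"] by simp
  also have "\<dots> = 2 powr (2/3 * real n + real (18 * s + 1))"
    by (simp only: powr_add)
  also have "\<dots> \<le> 2 powr (2/3 * real n + 37 * sqrt (real n))"
  proof -
    have h1: "sqrt (real n) \<ge> 1" using n1 by simp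
    have "real (18 * s + 1) = 18 * real s + 1" by simp
    also have "\<dots> \<le> 37 * sqrt (real n)" using sp(2) h1 by linarith
    finally have "real (18 * s + 1) \<le> 37 * sqrt (real n)" .
    then show ?thesis by simp
  qed
  finally show ?thesis .
qed

theorem theorem1p1:
  shows "\<exists>C::real. C > 0 \<and>
    (\<forall>n::nat. n \<ge> 1 \<longrightarrow>
      (\<exists>P \<subseteq> Pow {1..n}.
         real (card P) \<le> 2 powr (2/3 * real n + C * sqrt (real n)) \<and>
         (\<forall>(A::nat set) le. card A = n \<and> is_poset A le \<longrightarrow> contains_poset P A le)))"
proof (intro exI[of _ 37] conjI allI impI)
  fix n :: nat assume n1: "n \<ge> 1"
  define s where "s = nat \<lceil>sqrt (real n)\<rceil>"
  define K where "K = (2*n) div 3 + 2*s"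
  note sp = s_props[OF n1 s_def]
  define P where "P = Pow {1..min K n} \<union> FC n"
  have Psub: "P \<subseteq> Pow {1..n}" unfolding P_def using FC_sub by auto
  have "card P \<le> card (Pow {1..min K n}) + card (FC n)" unfolding P_def by (rule card_Un_le)
  also have "card (Pow {1..min K n}) = 2 ^ min K n" by (simp add: card_Pow)
  finally have "real (card P) \<le> 2 ^ min K n + real (card (FC n))" by (metis of_nat_add of_nat_le_iff of_nat_numeral of_nat_power)
  also have "\<dots> \<le> 2 ^ K + real ((n+1)^9) * 2 powr (2/3 * real n)"
    using FC_card[of n] by (intro add_mono) (auto intro: power_increasing)
  also have "\<dots> \<le> 2 powr (2/3 * real n + 37 * sqrt (real n))" by (rule final_bound[OF n1 s_def K_def])
  finally have cardP: "real (card P) \<le> 2 powr (2/3 * real n + 37 * sqrt (real n))" .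
  have cont: "contains_poset P A le" if A: "card A = n" "is_poset A le" for A :: "nat set" and le
  proof -
    have fin: "finite A"
    proof (rule ccontr)
      assume "infinite A"
      then have "card A = 0" by simp
      then show False using A(1) n1 by simp
    qed
    show ?thesis
    proof (cases "n \<le> K")
      case True
      have "contains_poset (Pow {1..n}) A le" using D_encoding[OF A(2) fin] A(1) by simp
      then show ?thesis by (rule contains_mono) (use True in \<open>auto simp: P_def\<close>)
    next
      case nK: False
      obtain CC X where CC: "finite CC" "\<Union>CC = A" "pairwise disjnt CC" "\<forall>C\<in>CC. chain_on le C"
          and X: "X \<subseteq> A" "antichain_on le X" "card CC \<le> card X"
        using dilworth[OF fin A(2)] by blast
      show ?thesis
      proof (cases "n \<le> 3 * card X")
        case True
        have s2: "2 \<le> s"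
        proof (rule ccontr)
          assume "\<not> 2 \<le> s"
          then have "s = 1" using sp(3) by simp
          then show False using sp(1) nK unfolding K_def by simp
        qed
        have cX: "card X \<le> s * s" using card_mono[OF fin X(1)] A(1) sp(1) by simp
        have "contains_poset (Pow {1..card A - card X + 2*s}) A le"
          by (rule antichain_embedding[OF A(2) fin X(1) X(2) s2 cX])
        moreover have "card A - card X + 2*s \<le> K" unfolding K_def using True A(1) by simp
        moreover have "Pow {1..card A - card X + 2*s} \<subseteq> Pow {1..K}"
          using calculation(2) by (intro Pow_mono) auto
        ultimately have "contains_poset (Pow {1..K}) A le"
          using contains_mono[of "Pow {1..card A - card X + 2*s}" A le "Pow {1..K}"] by blast
        then show ?thesis by (rule contains_mono) (use nK in \<open>auto simp: P_def\<close>)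
      next
        case False
        obtain PP where PP: "finite PP" "\<Union>PP = A" "pairwise disjnt PP"
            "\<forall>p\<in>PP. p \<noteq> {} \<and> card p \<le> 9 \<and> chain_on le p"
            "(\<Prod>p\<in>PP. card p + 1)^8 \<le> (2::nat)^(3 * card A + 7 * card CC)"
          using pieces[OF fin CC] by blast
        have "(\<Prod>p\<in>PP. card p + 1)^24 = ((\<Prod>p\<in>PP. card p + 1)^8)^3" by (simp add: power_mult[symmetric])
        also have "\<dots> \<le> ((2::nat)^(3 * card A + 7 * card CC))^3" by (rule power_mono[OF PP(5)]) simp
        also have "\<dots> = 2^(9 * n + 21 * card CC)" using A(1) by (simp add: power_mult[symmetric] algebra_simps)
        also have "\<dots> \<le> 2^(16 * n)" using False X(3) by (intro power_increasing) auto
        finally have "contains_poset (FC n) A le" using chain_embedding[OF A(2) fin A(1) PP(1-4)] by blast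
        then show ?thesis by (rule contains_mono) (auto simp: P_def)
      qed
    qed
  qed
  show "\<exists>P\<subseteq>Pow {1..n}. real (card P) \<le> 2 powr (2/3 * real n + 37 * sqrt (real n)) \<and>
         (\<forall>(A::nat set) le. card A = n \<and> is_poset A le \<longrightarrow> contains_poset P A le)"
    using Psub cardP cont by blast
qed simp

end
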